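(* Let $P$ be a finite graded connected poset with rank function $\rho$, let $G$ be a group of automorphisms of $P$, and let $\theta$ be the equivalence relation whose classes are the $G$-orbits. Then (1) $\rho(p)=\rho(q)$ whenever $p\,\theta\,q$; and (2) the quotient $P/G:=(P/\theta,\leqslant_\theta)$ is a graded poset (with rank function $[p]\mapsto\rho(p)$).
   Context: A poset is graded if there is an integer-valued rank function $\rho$ with $p<q\Rightarrow\rho(p)<\rho(q)$ and $p\lessdot q\Rightarrow\rho(q)=\rho(p)+1$, where $p\lessdot q$ means $p<q$ with nothing strictly between. A poset is connected if its Hasse diagram (the graph with vertices $P$ and an edge for each covering relation) is connected. For an equivalence relation $\theta$ with classes $[p]$, $[p]\leqslant_\theta[q]$ iff there exist $p'\in[p]$, $q'\in[q]$ with $p'\leqslant q'$. *)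

theory Defs
  imports Main
begin

definition poset_on :: "'a set \<Rightarrow> ('a \<Rightarrow> 'a \<Rightarrow> bool) \<Rightarrow> bool" where
  "poset_on P le \<longleftrightarrow>
     (\<forall>p\<in>P. le p p) \<and>
     (\<forall>p\<in>P. \<forall>q\<in>P. le p q \<and> le q p \<longrightarrow> p = q) \<and>
     (\<forall>p\<in>P. \<forall>q\<in>P. \<forall>r\<in>P. le p q \<and> le q r \<longrightarrow> le p r)"

definition less_on :: "'a set \<Rightarrow> ('a \<Rightarrow> 'a \<Rightarrow> bool) \<Rightarrow> 'a \<Rightarrow> 'a \<Rightarrow> bool" where
  "less_on P le p q \<longleftrightarrow> p \<in> P \<and> q \<in> P \<and> le p q \<and> p \<noteq> q"

definition covers_on :: "'a set \<Rightarrow> ('a \<Rightarrow> 'a \<Rightarrow> bool) \<Rightarrow> 'a \<Rightarrow> 'a \<Rightarrow> bool" where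
  "covers_on P le p q \<longleftrightarrow> less_on P le p q \<and>
     \<not> (\<exists>r\<in>P. less_on P le p r \<and> less_on P le r q)"

definition rank_function :: "'a set \<Rightarrow> ('a \<Rightarrow> 'a \<Rightarrow> bool) \<Rightarrow> ('a \<Rightarrow> int) \<Rightarrow> bool" where
  "rank_function P le \<rho> \<longleftrightarrow>
     (\<forall>p q. less_on P le p q \<longrightarrow> \<rho> p < \<rho> q) \<and>
     (\<forall>p q. covers_on P le p q \<longrightarrow> \<rho> q = \<rho> p + 1)"

definition graded_poset_with :: "'a set \<Rightarrow> ('a \<Rightarrow> 'a \<Rightarrow> bool) \<Rightarrow> ('a \<Rightarrow> int) \<Rightarrow> bool" where
  "graded_poset_with P le \<rho> \<longleftrightarrow> poset_on P le \<and> rank_function P le \<rho>"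

definition hasse_edges :: "'a set \<Rightarrow> ('a \<Rightarrow> 'a \<Rightarrow> bool) \<Rightarrow> ('a \<times> 'a) set" where
  "hasse_edges P le = {(p, q). covers_on P le p q \<or> covers_on P le q p}"

definition connected_poset :: "'a set \<Rightarrow> ('a \<Rightarrow> 'a \<Rightarrow> bool) \<Rightarrow> bool" where
  "connected_poset P le \<longleftrightarrow> (\<forall>p\<in>P. \<forall>q\<in>P. (p, q) \<in> (hasse_edges P le)\<^sup>*)"

text \<open>Automorphisms of the poset and groups of them (acting on P; values outside P irrelevant).\<close>
definition poset_automorphism :: "'a set \<Rightarrow> ('a \<Rightarrow> 'a \<Rightarrow> bool) \<Rightarrow> ('a \<Rightarrow> 'a) \<Rightarrow> bool" where
  "poset_automorphism P le g \<longleftrightarrow> bij_betw g P P \<and>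
     (\<forall>p\<in>P. \<forall>q\<in>P. le p q \<longleftrightarrow> le (g p) (g q))"

definition automorphism_group :: "'a set \<Rightarrow> ('a \<Rightarrow> 'a \<Rightarrow> bool) \<Rightarrow> ('a \<Rightarrow> 'a) set \<Rightarrow> bool" where
  "automorphism_group P le G \<longleftrightarrow>
     (\<forall>g\<in>G. poset_automorphism P le g) \<and>
     id \<in> G \<and>
     (\<forall>g\<in>G. \<forall>h\<in>G. g \<circ> h \<in> G) \<and>
     (\<forall>g\<in>G. \<exists>h\<in>G. \<forall>p\<in>P. h (g p) = p \<and> g (h p) = p)"

definition orbit_rel :: "'a set \<Rightarrow> ('a \<Rightarrow> 'a) set \<Rightarrow> ('a \<times> 'a) set" where
  "orbit_rel P G = {(p, q). p \<in> P \<and> q \<in> P \<and> (\<exists>g\<in>G. g p = q)}"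

definition quot_le :: "('a \<Rightarrow> 'a \<Rightarrow> bool) \<Rightarrow> 'a set \<Rightarrow> 'a set \<Rightarrow> bool" where
  "quot_le le C D \<longleftrightarrow> (\<exists>p\<in>C. \<exists>q\<in>D. le p q)"

end

theory Submission
  imports Defs
begin

theorem mainTheorem11:
  fixes P :: "'a set" and le :: "'a \<Rightarrow> 'a \<Rightarrow> bool" and \<rho> :: "'a \<Rightarrow> int"
    and G :: "('a \<Rightarrow> 'a) set"
  assumes "finite P"
    and "graded_poset_with P le \<rho>"
    and "connected_poset P le"
    and "automorphism_group P le G"
  shows "(\<forall>p q. (p, q) \<in> orbit_rel P G \<longrightarrow> \<rho> p = \<rho> q)
       \<and> graded_poset_with (P // orbit_rel P G) (quot_le le) (\<lambda>C. the_elem (\<rho> ` C))"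
proof -
  note fin = assms(1)
  have po: "poset_on P le" and rk: "rank_function P le \<rho>"
    using assms(2) by (auto simp: graded_poset_with_def)
  have refl: "\<And>p. p \<in> P \<Longrightarrow> le p p"
    and antis: "\<And>p q. p \<in> P \<Longrightarrow> q \<in> P \<Longrightarrow> le p q \<Longrightarrow> le q p \<Longrightarrow> p = q"
    and trans: "\<And>p q r. p \<in> P \<Longrightarrow> q \<in> P \<Longrightarrow> r \<in> P \<Longrightarrow> le p q \<Longrightarrow> le q r \<Longrightarrow> le p r"
    using po unfolding poset_on_def by blast+
  have rless: "\<And>p q. less_on P le p q \<Longrightarrow> \<rho> p < \<rho> q"
    and rcov: "\<And>p q. covers_on P le p q \<Longrightarrow> \<rho> q = \<rho> p + 1"
    using rk unfolding rank_function_def by blast+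
  have conn: "\<And>p q. p \<in> P \<Longrightarrow> q \<in> P \<Longrightarrow> (p, q) \<in> (hasse_edges P le)\<^sup>*"
    using assms(3) unfolding connected_poset_def by blast
  have bij: "\<And>g. g \<in> G \<Longrightarrow> bij_betw g P P"
    and lep: "\<And>g p q. g \<in> G \<Longrightarrow> p \<in> P \<Longrightarrow> q \<in> P \<Longrightarrow> le p q \<longleftrightarrow> le (g p) (g q)"
    and idG: "id \<in> G"
    and compG: "\<And>g h. g \<in> G \<Longrightarrow> h \<in> G \<Longrightarrow> g \<circ> h \<in> G"
    and invG: "\<And>g. g \<in> G \<Longrightarrow> \<exists>h\<in>G. \<forall>p\<in>P. h (g p) = p \<and> g (h p) = p"
    using assms(4) unfolding automorphism_group_def poset_automorphism_def by blast+
  have gP: "\<And>g p. g \<in> G \<Longrightarrow> p \<in> P \<Longrightarrow> g p \<in> P"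
    using bij bij_betwE by blast
  have ginj: "\<And>g p q. g \<in> G \<Longrightarrow> p \<in> P \<Longrightarrow> q \<in> P \<Longrightarrow> g p = g q \<Longrightarrow> p = q"
    using bij bij_betw_imp_inj_on inj_onD by metis
  have gsurj: "\<And>g r. g \<in> G \<Longrightarrow> r \<in> P \<Longrightarrow> \<exists>s\<in>P. r = g s"
    using bij bij_betw_imp_surj_on by blast
  have lessp: "\<And>g x y. g \<in> G \<Longrightarrow> less_on P le x y \<Longrightarrow> less_on P le (g x) (g y)"
    unfolding less_on_def using gP lep ginj by metis
  have lessr: "\<And>g x y. g \<in> G \<Longrightarrow> x \<in> P \<Longrightarrow> y \<in> P \<Longrightarrow> less_on P le (g x) (g y) \<Longrightarrow> less_on P le x y"
    unfolding less_on_def using gP lep ginj by metis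
  have covp: "\<And>g x y. g \<in> G \<Longrightarrow> covers_on P le x y \<Longrightarrow> covers_on P le (g x) (g y)"
  proof -
    fix g x y assume g: "g \<in> G" and c: "covers_on P le x y"
    have xy: "x \<in> P" "y \<in> P" using c unfolding covers_on_def less_on_def by auto
    show "covers_on P le (g x) (g y)"
      unfolding covers_on_def
    proof (intro conjI notI)
      show "less_on P le (g x) (g y)" using c g lessp unfolding covers_on_def by blast
    next
      assume "\<exists>r\<in>P. less_on P le (g x) r \<and> less_on P le r (g y)"
      then obtain r where r: "r \<in> P" "less_on P le (g x) r" "less_on P le r (g y)" by blast
      obtain s where s: "s \<in> P" "r = g s" using gsurj[OF g r(1)] by blast
      have "less_on P le x s" "less_on P le s y" using lessr[OF g] xy s r by auto
      thus False using c s(1) unfolding covers_on_def by blast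
    qed
  qed
  have edgeP: "\<And>x y. (x, y) \<in> hasse_edges P le \<Longrightarrow> x \<in> P \<and> y \<in> P"
    unfolding hasse_edges_def covers_on_def less_on_def by auto
  have inv: "\<And>g p. g \<in> G \<Longrightarrow> p \<in> P \<Longrightarrow> \<rho> (g p) = \<rho> p"
  proof -
    fix g p0 assume g: "g \<in> G" and p0: "p0 \<in> P"
    define c where "c = \<rho> (g p0) - \<rho> p0"
    have cst: "\<rho> (g q) = \<rho> q + c" if q: "q \<in> P" for q
    proof -
      have "(p0, q) \<in> (hasse_edges P le)\<^sup>*" using conn p0 q by blast
      thus ?thesis
      proof (induction rule: rtrancl_induct)
        case base thus ?case by (simp add: c_def)
      next
        case (step y z)
        from step.hyps(2) show ?case
          unfolding hasse_edges_def
        proof (elim CollectE case_prodE disjE)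
          fix a b assume e: "(y, z) = (a, b)" "covers_on P le a b"
          hence "\<rho> z = \<rho> y + 1" "\<rho> (g z) = \<rho> (g y) + 1" using rcov covp[OF g] by auto
          thus ?thesis using step.IH by simp
        next
          fix a b assume e: "(y, z) = (a, b)" "covers_on P le b a"
          hence "\<rho> y = \<rho> z + 1" "\<rho> (g y) = \<rho> (g z) + 1" using rcov covp[OF g] by auto
          thus ?thesis using step.IH by simp
        qed
      qed
    qed
    have "(\<Sum>q\<in>P. \<rho> (g q)) = (\<Sum>q\<in>P. \<rho> q)"
      using sum.reindex[of g P \<rho>] bij[OF g] by (simp add: bij_betw_def)
    also have "(\<Sum>q\<in>P. \<rho> (g q)) = (\<Sum>q\<in>P. \<rho> q + c)" using cst by simp
    finally have "int (card P) * c = 0" by (simp add: sum.distrib)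
    moreover have "card P > 0" using fin p0 card_gt_0_iff by blast
    ultimately have "c = 0" by simp
    thus "\<rho> (g p0) = \<rho> p0" by (simp add: c_def)
  qed
  define \<theta> where "\<theta> = orbit_rel P G"
  have part1: "\<forall>p q. (p, q) \<in> \<theta> \<longrightarrow> \<rho> p = \<rho> q"
    unfolding \<theta>_def orbit_rel_def using inv by auto
  have eqv: "equiv P \<theta>"
  proof (rule equivI)
    show "refl_on P \<theta>" unfolding refl_on_def \<theta>_def orbit_rel_def using idG by (auto, metis id_apply)
    show "sym \<theta>" unfolding sym_def \<theta>_def orbit_rel_def using invG by fastforce
    show "trans \<theta>" unfolding trans_def \<theta>_def orbit_rel_def using compG
      by simp (metis comp_apply)
    show "\<theta> \<subseteq> P \<times> P" unfolding \<theta>_def orbit_rel_def by auto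
  qed
  have clsP: "\<And>C x. C \<in> P // \<theta> \<Longrightarrow> x \<in> C \<Longrightarrow> x \<in> P"
    using eqv in_quotient_imp_subset by blast
  have clsrel: "\<And>C x y. C \<in> P // \<theta> \<Longrightarrow> x \<in> C \<Longrightarrow> y \<in> C \<Longrightarrow> (x, y) \<in> \<theta>"
    using eqv quotient_eq_iff by metis
  have clsne: "\<And>C. C \<in> P // \<theta> \<Longrightarrow> C \<noteq> {}"
    using eqv in_quotient_imp_non_empty by blast
  have clsr: "\<And>C x. C \<in> P // \<theta> \<Longrightarrow> x \<in> C \<Longrightarrow> the_elem (\<rho> ` C) = \<rho> x"
  proof -
    fix C x assume C: "C \<in> P // \<theta>" and x: "x \<in> C"
    have "\<rho> ` C = {\<rho> x}" using clsrel[OF C x] part1 x by (auto, metis)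
    thus "the_elem (\<rho> ` C) = \<rho> x" by simp
  qed
  have clseq: "\<And>C D x. C \<in> P // \<theta> \<Longrightarrow> D \<in> P // \<theta> \<Longrightarrow> x \<in> C \<Longrightarrow> x \<in> D \<Longrightarrow> C = D"
    using eqv quotient_disj by blast
  have clsof: "\<And>x. x \<in> P \<Longrightarrow> \<theta> `` {x} \<in> P // \<theta>" by (simp add: quotientI)
  have inown: "\<And>x. x \<in> P \<Longrightarrow> x \<in> \<theta> `` {x}" using eqv equiv_class_self by metis
  have orb: "\<And>C x y. C \<in> P // \<theta> \<Longrightarrow> x \<in> C \<Longrightarrow> y \<in> C \<Longrightarrow> \<exists>g\<in>G. g x = y"
    using clsrel unfolding \<theta>_def orbit_rel_def by blast
  have closedG: "\<And>C x g. C \<in> P // \<theta> \<Longrightarrow> x \<in> C \<Longrightarrow> g \<in> G \<Longrightarrow> g x \<in> C"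
  proof -
    fix C x g assume C: "C \<in> P // \<theta>" and x: "x \<in> C" and g: "g \<in> G"
    have xP: "x \<in> P" using clsP C x by blast
    have "(x, g x) \<in> \<theta>" unfolding \<theta>_def orbit_rel_def using xP g gP by blast
    moreover have "C = \<theta> `` {x}" using C x eqv equiv_class_eq_iff quotientE
      by (metis Image_singleton_iff equiv_class_eq)
    ultimately show "g x \<in> C" by simp
  qed
  have qpo: "poset_on (P // \<theta>) (quot_le le)"
    unfolding poset_on_def
  proof (intro conjI ballI impI)
    fix C assume C: "C \<in> P // \<theta>"
    then obtain x where "x \<in> C" using clsne by blast
    thus "quot_le le C C" unfolding quot_le_def using refl clsP C by blast
  next
    fix C D assume C: "C \<in> P // \<theta>" and D: "D \<in> P // \<theta>" and h: "quot_le le C D \<and> quot_le le D C"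
    then obtain p q q' p' where pq: "p \<in> C" "q \<in> D" "le p q" "q' \<in> D" "p' \<in> C" "le q' p'"
      unfolding quot_le_def by blast
    have P: "p \<in> P" "q \<in> P" "p' \<in> P" "q' \<in> P" using pq clsP C D by blast+
    have r1: "\<rho> p \<le> \<rho> q" using rless[of p q] pq P unfolding less_on_def by fastforce
    have r2: "\<rho> q' \<le> \<rho> p'" using rless[of q' p'] pq P unfolding less_on_def by fastforce
    have "\<rho> p = \<rho> p'" "\<rho> q = \<rho> q'" using clsr C D pq by metis+
    hence "\<rho> p = \<rho> q" using r1 r2 by simp
    hence "p = q" using rless[of p q] pq P unfolding less_on_def by fastforce
    thus "C = D" using clseq C D pq by blast
  next
    fix C D E assume C: "C \<in> P // \<theta>" and D: "D \<in> P // \<theta>" and E: "E \<in> P // \<theta>"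
      and h: "quot_le le C D \<and> quot_le le D E"
    then obtain p q q' r where pq: "p \<in> C" "q \<in> D" "le p q" "q' \<in> D" "r \<in> E" "le q' r"
      unfolding quot_le_def by blast
    have P: "p \<in> P" "q \<in> P" "q' \<in> P" "r \<in> P" using pq clsP C D E by blast+
    obtain g where g: "g \<in> G" "g q = q'" using orb D pq by blast
    have "le (g p) q'" using lep g P pq by metis
    hence "le (g p) r" using trans gP g P pq by blast
    moreover have "g p \<in> C" using closedG C pq g by blast
    ultimately show "quot_le le C E" unfolding quot_le_def using pq by blast
  qed
  have qless: "\<And>C D. less_on (P // \<theta>) (quot_le le) C D \<Longrightarrow>
      the_elem (\<rho> ` C) < the_elem (\<rho> ` D)"
  proof -
    fix C D assume h: "less_on (P // \<theta>) (quot_le le) C D"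
    hence C: "C \<in> P // \<theta>" and D: "D \<in> P // \<theta>" and ne: "C \<noteq> D"
      unfolding less_on_def by auto
    from h obtain p q where pq: "p \<in> C" "q \<in> D" "le p q"
      unfolding less_on_def quot_le_def by blast
    have "p \<noteq> q" using ne clseq C D pq by blast
    hence "\<rho> p < \<rho> q" using rless pq clsP C D unfolding less_on_def by blast
    thus "the_elem (\<rho> ` C) < the_elem (\<rho> ` D)" using clsr C D pq by simp
  qed
  have qcov: "\<And>C D. covers_on (P // \<theta>) (quot_le le) C D \<Longrightarrow>
      the_elem (\<rho> ` D) = the_elem (\<rho> ` C) + 1"
  proof -
    fix C D assume h: "covers_on (P // \<theta>) (quot_le le) C D"
    hence hl: "less_on (P // \<theta>) (quot_le le) C D" unfolding covers_on_def by blast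
    hence C: "C \<in> P // \<theta>" and D: "D \<in> P // \<theta>" and ne: "C \<noteq> D"
      unfolding less_on_def by auto
    from hl obtain p q where pq: "p \<in> C" "q \<in> D" "le p q"
      unfolding less_on_def quot_le_def by blast
    have P: "p \<in> P" "q \<in> P" using pq clsP C D by blast+
    have "p \<noteq> q" using ne clseq C D pq by blast
    define S where "S = {r \<in> P. less_on P le p r \<and> le r q}"
    have qS: "q \<in> S" unfolding S_def less_on_def using P pq \<open>p \<noteq> q\<close> refl by blast
    have finS: "finite S" using fin unfolding S_def by simp
    obtain r where rS: "r \<in> S" and rmin: "\<rho> r = Min (\<rho> ` S)"
      using Min_in[of "\<rho> ` S"] finS qS by (metis empty_iff finite_imageI image_iff image_is_empty)
    have rP: "r \<in> P" and pr: "less_on P le p r" and rq: "le r q" using rS unfolding S_def by auto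
    have cov: "covers_on P le p r"
      unfolding covers_on_def
    proof (intro conjI notI)
      show "less_on P le p r" by (rule pr)
    next
      assume "\<exists>s\<in>P. less_on P le p s \<and> less_on P le s r"
      then obtain s where s: "s \<in> P" "less_on P le p s" "less_on P le s r" by blast
      have "le s q" using trans s rP P rq unfolding less_on_def by blast
      hence "s \<in> S" using s unfolding S_def by blast
      hence "\<rho> r \<le> \<rho> s" using rmin finS by simp
      moreover have "\<rho> s < \<rho> r" using rless s by blast
      ultimately show False by simp
    qed
    hence rr: "\<rho> r = \<rho> p + 1" using rcov by blast
    define E where "E = \<theta> `` {r}"
    have E: "E \<in> P // \<theta>" "r \<in> E" using clsof inown rP unfolding E_def by auto
    have CE: "quot_le le C E" unfolding quot_le_def using pq E pr unfolding less_on_def by blast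
    have ED: "quot_le le E D" unfolding quot_le_def using pq E rq by blast
    have "C \<noteq> E"
    proof
      assume "C = E"
      hence "\<rho> r = \<rho> p" using clsr[OF C] E pq(1) by metis
      thus False using rr by simp
    qed
    hence lCE: "less_on (P // \<theta>) (quot_le le) C E" using C E CE unfolding less_on_def by blast
    have "E = D"
    proof (rule ccontr)
      assume "E \<noteq> D"
      hence "less_on (P // \<theta>) (quot_le le) E D" using D E ED unfolding less_on_def by blast
      thus False using h lCE E unfolding covers_on_def by blast
    qed
    thus "the_elem (\<rho> ` D) = the_elem (\<rho> ` C) + 1" using clsr C E pq rr by metis
  qed
  have "graded_poset_with (P // \<theta>) (quot_le le) (\<lambda>C. the_elem (\<rho> ` C))"
    unfolding graded_poset_with_def rank_function_def using qpo qless qcov by blast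
  thus ?thesis using part1 unfolding \<theta>_def by blast
qed

end
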